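(* Fix $\rho>0$ and $W>0$, and for $N\in\mathbb{N}$ put $L=N/(\rho W)$ (so $\rho=N/(LW)$ and $\tau=iW/L=i\rho W^2/N$). Let $K^{R_N}$ be the correlation kernels below. Then for all $z=x+iy$, $z'=x'+iy'\in\mathbb{C}$, as $N\to\infty$: (i) $K^{A_{N-1}}(z,z')\to\mathcal{K}^A_{W,\rho}(z,z')=\sqrt2\rho e^{-\pi\rho(y^2+y'^2)}\int_0^{\sqrt\rho W}d\lambda\,e^{-2\pi\lambda^2+2\pi i\sqrt\rho(z-\bar z')\lambda}\vartheta_2(\sqrt\rho W(i\lambda+\sqrt\rho z);i\rho W^2)\vartheta_2(\sqrt\rho W(i\lambda-\sqrt\rho\bar z');i\rho W^2)$; (ii) for $R_N=B_N,B_N^\vee$, $K^{R_N}(z,z')\to\mathcal{K}^B_{W,\rho}(z,z')=-\rho e^{-2\pi\rho(y^2+y'^2)}[I_1^{(1)}-I_2^{(1)}]$; (iii) for $R_N=C_N,C_N^\vee,BC_N$, $K^{R_N}(z,z')\to\mathcal{K}^C_{W,\rho}(z,z')=\rho e^{-2\pi\rho(y^2+y'^2)}[I_1^{(2)}-I_2^{(2)}]$; (iv) $K^{D_N}(z,z')\to\mathcal{K}^D_{W,\rho}(z,z')=\rho e^{-2\pi\rho(y^2+y'^2)}[I_1^{(2)}+I_2^{(2)}]$; where for $\mu\in\{1,2\}$, $I_1^{(\mu)}=\int_{-\sqrt\rho W}^{\sqrt\rho W}d\lambda\,e^{-\pi\lambda^2+2\pi i\sqrt\rho(z-\bar z')\lambda}\vartheta_\mu(\sqrt\rho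 W(i\lambda+2\sqrt\rho z);2i\rho W^2)\vartheta_\mu(\sqrt\rho W(i\lambda-2\sqrt\rho\bar z');2i\rho W^2)$, $I_2^{(\mu)}=\int_{-\sqrt\rho W}^{\sqrt\rho W}d\lambda\,e^{-\pi\lambda^2+2\pi i\sqrt\rho(z+\bar z')\lambda}\vartheta_\mu(\sqrt\rho W(i\lambda+2\sqrt\rho z);2i\rho W^2)\vartheta_\mu(\sqrt\rho W(i\lambda+2\sqrt\rho\bar z');2i\rho W^2)$.
   Context: Jacobi theta functions ($\Im\tau>0$, $q_0=e^{\pi i\tau}$): $\vartheta_1(v;\tau)=i\sum_{n\in\mathbb{Z}}(-1)^nq_0^{(n-1/2)^2}e^{(2n-1)\pi iv}$, $\vartheta_2(v;\tau)=\sum_nq_0^{(n-1/2)^2}e^{(2n-1)\pi iv}$. For type $R_N\in\{A_{N-1},B_N,B_N^\vee,C_N,C_N^\vee,BC_N,D_N\}$: $\mathcal{N}$ is $N$ ($A_{N-1}$), $2N-1$ ($B_N$), $2N$ ($B_N^\vee,C_N^\vee$), $2(N+1)$ ($C_N$), $2N+1$ ($BC_N$), $2(N-1)$ ($D_N$); $J(j)$ is $j-1/2$ ($A_{N-1},C_N^\vee$), $j-1$ ($B_N,B_N^\vee,D_N$), $j$ ($C_N,BC_N$). $M_j^{R_N}(z)$: for $A_{N-1}$, $e^{2\pi iJ(j)z/L}\vartheta_2(J(j)\tau+\mathcal{N}z/L;\mathcal{N}\tau)$; for $B_N,B_N^\vee$, $e^{2\pi iJ(j)z/L}\vartheta_1(J(j)\tau+\mathcal{N}z/L;\mathcal{N}\tau)-e^{-2\pi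 iJ(j)z/L}\vartheta_1(J(j)\tau-\mathcal{N}z/L;\mathcal{N}\tau)$; for $C_N,C_N^\vee,BC_N$ the same with $\vartheta_2$; for $D_N$, $e^{2\pi iJ(j)z/L}\vartheta_2(J(j)\tau+\mathcal{N}z/L;\mathcal{N}\tau)+e^{-2\pi iJ(j)z/L}\vartheta_2(J(j)\tau-\mathcal{N}z/L;\mathcal{N}\tau)$. With $e_j=e^{-2\tau\pi iJ(j)^2/\mathcal{N}}$, $c=LW/\sqrt{2\mathcal{N}\Im\tau}$: $h_j^{A_{N-1}}=ce_j$; $h_j=2ce_j$ for $C_N,C_N^\vee,BC_N$; for $B_N,B_N^\vee$: $h_1=4ce_1$, $h_j=2ce_j$ ($j\ge2$); for $D_N$: $h_j=4ce_j$ ($j\in\{1,N\}$), $2ce_j$ otherwise. The kernel is $K^{R_N}(z,z')=e^{-\pi\mathcal{N}(y^2+y'^2)/(LW)}\sum_{n=1}^N M^{R_N}_n(z)\overline{M^{R_N}_n(z')}/h^{R_N}_n$. *)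

theory Defs
  imports "HOL-Analysis.Analysis"
begin

section \<open>Jacobi theta functions (q0 = exp(pi i tau), q0^a read as exp(pi i tau a))\<close>

definition theta1 :: "complex \<Rightarrow> complex \<Rightarrow> complex" where
  "theta1 v \<tau> = \<i> * (\<Sum>\<^sub>\<infinity>n::int. (-1) powi n * exp (pi * \<i> * \<tau> * (of_int n - 1/2)^2)
                         * exp ((2 * of_int n - 1) * pi * \<i> * v))"

definition theta2 :: "complex \<Rightarrow> complex \<Rightarrow> complex" where
  "theta2 v \<tau> = (\<Sum>\<^sub>\<infinity>n::int. exp (pi * \<i> * \<tau> * (of_int n - 1/2)^2)
                         * exp ((2 * of_int n - 1) * pi * \<i> * v))"

datatype rtype = A | B | Bv | C | Cv | BC | D
  (* A = A_{N-1}, B = B_N, Bv = B_N^vee, C = C_N, Cv = C_N^vee, BC = BC_N, D = D_N *)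

fun calN :: "rtype \<Rightarrow> nat \<Rightarrow> real" where
  "calN A N = real N"
| "calN B N = 2 * real N - 1"
| "calN Bv N = 2 * real N"
| "calN Cv N = 2 * real N"
| "calN C N = 2 * (real N + 1)"
| "calN BC N = 2 * real N + 1"
| "calN D N = 2 * (real N - 1)"

fun Jidx :: "rtype \<Rightarrow> nat \<Rightarrow> real" where
  "Jidx A j = real j - 1/2"
| "Jidx Cv j = real j - 1/2"
| "Jidx B j = real j - 1"
| "Jidx Bv j = real j - 1"
| "Jidx D j = real j - 1"
| "Jidx C j = real j"
| "Jidx BC j = real j"

definition Mfun :: "rtype \<Rightarrow> nat \<Rightarrow> real \<Rightarrow> complex \<Rightarrow> nat \<Rightarrow> complex \<Rightarrow> complex" where
  "Mfun t N L \<tau> j z =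
    (let J = complex_of_real (Jidx t j); NN = complex_of_real (calN t N);
         Lc = complex_of_real L;
         ep = exp (2 * pi * \<i> * J * z / Lc); em = exp (- 2 * pi * \<i> * J * z / Lc)
     in (case t of
          A \<Rightarrow> ep * theta2 (J * \<tau> + NN * z / Lc) (NN * \<tau>)
        | B \<Rightarrow> ep * theta1 (J * \<tau> + NN * z / Lc) (NN * \<tau>) - em * theta1 (J * \<tau> - NN * z / Lc) (NN * \<tau>)
        | Bv \<Rightarrow> ep * theta1 (J * \<tau> + NN * z / Lc) (NN * \<tau>) - em * theta1 (J * \<tau> - NN * z / Lc) (NN * \<tau>)
        | C \<Rightarrow> ep * theta2 (J * \<tau> + NN * z / Lc) (NN * \<tau>) - em * theta2 (J * \<tau> - NN * z / Lc) (NN * \<tau>)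
        | Cv \<Rightarrow> ep * theta2 (J * \<tau> + NN * z / Lc) (NN * \<tau>) - em * theta2 (J * \<tau> - NN * z / Lc) (NN * \<tau>)
        | BC \<Rightarrow> ep * theta2 (J * \<tau> + NN * z / Lc) (NN * \<tau>) - em * theta2 (J * \<tau> - NN * z / Lc) (NN * \<tau>)
        | D \<Rightarrow> ep * theta2 (J * \<tau> + NN * z / Lc) (NN * \<tau>) + em * theta2 (J * \<tau> - NN * z / Lc) (NN * \<tau>)))"

definition hfun :: "rtype \<Rightarrow> nat \<Rightarrow> real \<Rightarrow> real \<Rightarrow> complex \<Rightarrow> nat \<Rightarrow> complex" where
  "hfun t N L W \<tau> j =
    (let J = complex_of_real (Jidx t j); NN = complex_of_real (calN t N);
         e = exp (- 2 * \<tau> * pi * \<i> * J^2 / NN);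
         c = complex_of_real (L * W / sqrt (2 * calN t N * Im \<tau>))
     in (case t of
          A \<Rightarrow> c * e
        | B \<Rightarrow> (if j = 1 then 4 * c * e else 2 * c * e)
        | Bv \<Rightarrow> (if j = 1 then 4 * c * e else 2 * c * e)
        | C \<Rightarrow> 2 * c * e
        | Cv \<Rightarrow> 2 * c * e
        | BC \<Rightarrow> 2 * c * e
        | D \<Rightarrow> (if j = 1 \<or> j = N then 4 * c * e else 2 * c * e)))"

definition Kern :: "rtype \<Rightarrow> nat \<Rightarrow> real \<Rightarrow> real \<Rightarrow> complex \<Rightarrow> complex \<Rightarrow> complex \<Rightarrow> complex" where
  "Kern t N L W \<tau> z z' =
     complex_of_real (exp (- pi * calN t N * ((Im z)^2 + (Im z')^2) / (L * W)))
     * (\<Sum>n = 1..N. Mfun t N L \<tau> n z * cnj (Mfun t N L \<tau> n z') / hfun t N L W \<tau> n)"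

definition KA :: "real \<Rightarrow> real \<Rightarrow> complex \<Rightarrow> complex \<Rightarrow> complex" where
  "KA W \<rho> z z' =
     (let r = complex_of_real (sqrt \<rho>); w = complex_of_real W; p = complex_of_real \<rho> in
     complex_of_real (sqrt 2 * \<rho> * exp (- pi * \<rho> * ((Im z)^2 + (Im z')^2)))
     * integral {0 .. sqrt \<rho> * W} (\<lambda>s::real.
         exp (- 2 * pi * (complex_of_real s)^2 + 2 * pi * \<i> * r * (z - cnj z') * complex_of_real s)
         * theta2 (r * w * (\<i> * complex_of_real s + r * z)) (\<i> * p * w^2)
         * theta2 (r * w * (\<i> * complex_of_real s - r * cnj z')) (\<i> * p * w^2)))"

definition theta_mu :: "nat \<Rightarrow> complex \<Rightarrow> complex \<Rightarrow> complex" where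
  "theta_mu \<mu> = (if \<mu> = 1 then theta1 else theta2)"

definition I1 :: "nat \<Rightarrow> real \<Rightarrow> real \<Rightarrow> complex \<Rightarrow> complex \<Rightarrow> complex" where
  "I1 \<mu> W \<rho> z z' =
     (let r = complex_of_real (sqrt \<rho>); w = complex_of_real W; p = complex_of_real \<rho> in
     integral {- sqrt \<rho> * W .. sqrt \<rho> * W} (\<lambda>s::real.
         exp (- pi * (complex_of_real s)^2 + 2 * pi * \<i> * r * (z - cnj z') * complex_of_real s)
         * theta_mu \<mu> (r * w * (\<i> * complex_of_real s + 2 * r * z)) (2 * \<i> * p * w^2)
         * theta_mu \<mu> (r * w * (\<i> * complex_of_real s - 2 * r * cnj z')) (2 * \<i> * p * w^2)))"

definition I2 :: "nat \<Rightarrow> real \<Rightarrow> real \<Rightarrow> complex \<Rightarrow> complex \<Rightarrow> complex" where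
  "I2 \<mu> W \<rho> z z' =
     (let r = complex_of_real (sqrt \<rho>); w = complex_of_real W; p = complex_of_real \<rho> in
     integral {- sqrt \<rho> * W .. sqrt \<rho> * W} (\<lambda>s::real.
         exp (- pi * (complex_of_real s)^2 + 2 * pi * \<i> * r * (z + cnj z') * complex_of_real s)
         * theta_mu \<mu> (r * w * (\<i> * complex_of_real s + 2 * r * z)) (2 * \<i> * p * w^2)
         * theta_mu \<mu> (r * w * (\<i> * complex_of_real s + 2 * r * cnj z')) (2 * \<i> * p * w^2)))"

definition KB :: "real \<Rightarrow> real \<Rightarrow> complex \<Rightarrow> complex \<Rightarrow> complex" where
  "KB W \<rho> z z' = - complex_of_real (\<rho> * exp (- 2 * pi * \<rho> * ((Im z)^2 + (Im z')^2)))
                   * (I1 1 W \<rho> z z' - I2 1 W \<rho> z z')"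

definition KC :: "real \<Rightarrow> real \<Rightarrow> complex \<Rightarrow> complex \<Rightarrow> complex" where
  "KC W \<rho> z z' = complex_of_real (\<rho> * exp (- 2 * pi * \<rho> * ((Im z)^2 + (Im z')^2)))
                   * (I1 2 W \<rho> z z' - I2 2 W \<rho> z z')"

definition KD :: "real \<Rightarrow> real \<Rightarrow> complex \<Rightarrow> complex \<Rightarrow> complex" where
  "KD W \<rho> z z' = complex_of_real (\<rho> * exp (- 2 * pi * \<rho> * ((Im z)^2 + (Im z')^2)))
                   * (I1 2 W \<rho> z z' + I2 2 W \<rho> z z')"

definition KN :: "rtype \<Rightarrow> real \<Rightarrow> real \<Rightarrow> nat \<Rightarrow> complex \<Rightarrow> complex \<Rightarrow> complex" where
  "KN t W \<rho> N z z' =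
     (let L = real N / (\<rho> * W) in Kern t N L W (\<i> * complex_of_real (W / L)) z z')"

end

theory Submission
  imports Defs
begin

definition t2 :: "complex \<Rightarrow> complex \<Rightarrow> int \<Rightarrow> complex" where
  "t2 v T n = exp (pi * \<i> * T * (of_int n - 1/2)^2) * exp ((2 * of_int n - 1) * pi * \<i> * v)"

lemma theta2_t2: "theta2 v T = infsum (t2 v T) UNIV"
  unfolding theta2_def t2_def by simp

lemma theta1_t2: "theta1 v T = \<i> * infsum (\<lambda>n. (-1) powi n * t2 v T n) UNIV"
  unfolding theta1_def t2_def by (simp add: mult.assoc)

lemma norm_t2: "norm (t2 v T n) = exp (- pi * Im T * (of_int n - 1/2)^2 - (2 * of_int n - 1) * pi * Im v)"
proof -
  have e: "(of_int n - 1/2 :: complex)^2 = complex_of_real ((of_int n - 1/2)^2)" by simp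
  have e2: "(2 * of_int n - 1 :: complex) = complex_of_real (2 * of_int n - 1)" by simp
  show ?thesis unfolding t2_def norm_mult norm_exp_eq_Re e e2
    by (simp add: exp_add[symmetric] algebra_simps)
qed

lemma summable_exp_abs_int: "(\<lambda>n::int. exp (- \<bar>real_of_int n\<bar>)) summable_on UNIV"
proof -
  have U: "(UNIV::int set) = range int \<union> range (\<lambda>m. - int m - 1)"
  proof (intro set_eqI iffI)
    fix n :: int
    show "n \<in> range int \<union> range (\<lambda>m. - int m - 1)"
    proof (cases "n \<ge> 0")
      case True then have "n = int (nat n)" by simp
      then show ?thesis by blast
    next
      case False then have "n = - int (nat (- n - 1)) - 1" by simp
      then show ?thesis by blast
    qed
  qed auto
  have g: "summable (\<lambda>m::nat. exp (-1::real) ^ m)" by (rule summable_geometric) simp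
  have s1: "(\<lambda>m::nat. exp (- \<bar>real_of_int (int m)\<bar>)) summable_on UNIV"
  proof (rule norm_summable_imp_summable_on)
    show "summable (\<lambda>m::nat. norm (exp (- \<bar>real_of_int (int m)\<bar>)))"
      using g by (simp add: exp_of_nat_mult[symmetric])
  qed
  have s2: "(\<lambda>m::nat. exp (- \<bar>real_of_int (- int m - 1)\<bar>)) summable_on UNIV"
  proof (rule norm_summable_imp_summable_on)
    have "summable (\<lambda>m::nat. exp (-1) * exp (-1::real) ^ m)" using g by (rule summable_mult)
    moreover have "exp (- \<bar>real_of_int (- int m - 1)\<bar>) = exp (-1) * exp (-1::real) ^ m" for m
      by (simp add: exp_of_nat_mult[symmetric] exp_add[symmetric])
    ultimately show "summable (\<lambda>m::nat. norm (exp (- \<bar>real_of_int (- int m - 1)\<bar>)))" by simp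
  qed
  have a: "(\<lambda>n::int. exp (- \<bar>real_of_int n\<bar>)) summable_on range int"
    using s1 by (subst summable_on_reindex) (auto simp: o_def inj_on_def)
  have b: "(\<lambda>n::int. exp (- \<bar>real_of_int n\<bar>)) summable_on range (\<lambda>m. - int m - 1)"
    using s2 by (subst summable_on_reindex) (auto simp: o_def inj_on_def)
  show ?thesis unfolding U by (rule summable_on_Un_disjoint[OF a b]) auto
qed

lemma quad_bound:
  fixes al be x :: real assumes "al > 0"
  shows "- al * x^2 + be * \<bar>x\<bar> \<le> (be + 1)^2 / (4 * al) - \<bar>x\<bar>"
proof -
  have "0 \<le> al * (\<bar>x\<bar> - (be + 1) / (2 * al))^2" using assms by simp
  also have "al * (\<bar>x\<bar> - (be + 1) / (2 * al))^2 = al * x^2 - (be+1) * \<bar>x\<bar> + (be + 1)^2 / (4 * al)"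
    using assms by (simp add: power2_eq_square field_simps)
  finally show ?thesis by (simp add: algebra_simps)
qed

lemma t2_bound:
  assumes "t0 > 0" "Im T \<ge> t0" "\<bar>Im v\<bar> \<le> Bd"
  shows "norm (t2 v T n) \<le> exp ((2*pi*Bd + 1)^2 / (4 * (pi*t0)) + 1/2) * exp (- \<bar>real_of_int n\<bar>)"
proof -
  define x where "x = real_of_int n - 1/2"
  have "- pi * Im T * x^2 \<le> - (pi * t0) * x^2"
    using assms by (intro mult_right_mono) auto
  moreover have "- (2 * real_of_int n - 1) * pi * Im v \<le> (2*pi*Bd) * \<bar>x\<bar>"
  proof -
    have "- (2 * real_of_int n - 1) * pi * Im v \<le> \<bar>(2 * real_of_int n - 1) * pi * Im v\<bar>" by linarith
    also have "\<dots> = 2 * pi * \<bar>x\<bar> * \<bar>Im v\<bar>"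
    proof -
      have "\<bar>2 * real_of_int n - 1\<bar> = 2 * \<bar>x\<bar>" unfolding x_def by (simp add: abs_if)
      then show ?thesis by (simp add: abs_mult)
    qed
    also have "\<dots> \<le> 2 * pi * \<bar>x\<bar> * Bd" using assms by (intro mult_left_mono) auto
    finally show ?thesis by (simp add: mult_ac)
  qed
  moreover have "- (pi * t0) * x^2 + (2*pi*Bd) * \<bar>x\<bar> \<le> (2*pi*Bd + 1)^2 / (4 * (pi*t0)) - \<bar>x\<bar>"
    using assms by (intro quad_bound) auto
  moreover have "- \<bar>x\<bar> \<le> 1/2 - \<bar>real_of_int n\<bar>" unfolding x_def by linarith
  ultimately have "- pi * Im T * x^2 - (2 * real_of_int n - 1) * pi * Im v
      \<le> (2*pi*Bd + 1)^2 / (4 * (pi*t0)) + 1/2 + (- \<bar>real_of_int n\<bar>)" by linarith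
  then show ?thesis unfolding norm_t2 x_def[symmetric] exp_add[symmetric] by simp
qed

lemma cont_theta_gen:
  fixes S :: "'a::topological_space set"
  assumes S: "compact S" and cV: "continuous_on S V" and cT: "continuous_on S T"
    and pos: "\<forall>x\<in>S. Im (T x) > 0"
    and sg: "\<And>n. norm (sg n :: complex) = 1"
  shows "continuous_on S (\<lambda>x. infsum (\<lambda>n. sg n * t2 (V x) (T x) n) UNIV)"
proof (cases "S = {}")
  case True then show ?thesis by simp
next
  case False
  have cIT: "continuous_on S (\<lambda>x. Im (T x))" using cT by (intro continuous_intros)
  obtain x0 where x0: "x0 \<in> S" "\<forall>y\<in>S. Im (T x0) \<le> Im (T y)"
    using continuous_attains_inf[OF S False cIT] by blast
  define t0 where "t0 = Im (T x0)"
  have t0: "t0 > 0" using pos x0 unfolding t0_def by auto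
  have cIV: "continuous_on S (\<lambda>x. Im (V x))" using cV by (intro continuous_intros)
  have "compact ((\<lambda>x. Im (V x)) ` S)" by (rule compact_continuous_image[OF cIV S])
  then obtain Bd where Bd: "\<forall>y\<in>(\<lambda>x. Im (V x)) ` S. norm y \<le> Bd"
    using compact_imp_bounded bounded_iff by blast
  define K where "K = exp ((2*pi*Bd + 1)^2 / (4 * (pi*t0)) + 1/2)"
  have ul: "uniform_limit S (\<lambda>X x. \<Sum>n\<in>X. sg n * t2 (V x) (T x) n)
      (\<lambda>x. \<Sum>\<^sub>\<infinity>n\<in>UNIV. sg n * t2 (V x) (T x) n) (finite_subsets_at_top UNIV)"
  proof (rule Weierstrass_m_test_general[where M = "\<lambda>n. K * exp (- \<bar>real_of_int n\<bar>)"])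
    fix n :: int and x assume "n \<in> UNIV" "x \<in> S"
    then have "norm (t2 (V x) (T x) n) \<le> K * exp (- \<bar>real_of_int n\<bar>)"
      unfolding K_def using x0 Bd t0 unfolding t0_def by (intro t2_bound) auto
    then show "norm (sg n * t2 (V x) (T x) n) \<le> K * exp (- \<bar>real_of_int n\<bar>)"
      by (simp add: norm_mult sg)
  next
    show "(\<lambda>n. K * exp (- \<bar>real_of_int n\<bar>)) summable_on UNIV"
      using summable_exp_abs_int by (rule summable_on_cmult_right)
  qed
  show ?thesis
  proof (rule uniform_limit_theorem[OF _ ul])
    show "\<forall>\<^sub>F X in finite_subsets_at_top UNIV. continuous_on S (\<lambda>x. \<Sum>n\<in>X. sg n * t2 (V x) (T x) n)"
      unfolding t2_def by (intro always_eventually allI continuous_on_sum continuous_intros cV cT)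
  qed simp
qed

lemma cont_theta2:
  fixes S :: "'a::topological_space set"
  assumes "compact S" "continuous_on S V" "continuous_on S T" "\<forall>x\<in>S. Im (T x) > 0"
  shows "continuous_on S (\<lambda>x. theta2 (V x) (T x))"
  using cont_theta_gen[OF assms, of "\<lambda>_. 1"] unfolding theta2_t2 by simp

lemma cont_theta1:
  fixes S :: "'a::topological_space set"
  assumes "compact S" "continuous_on S V" "continuous_on S T" "\<forall>x\<in>S. Im (T x) > 0"
  shows "continuous_on S (\<lambda>x. theta1 (V x) (T x))"
  unfolding theta1_t2
  by (intro continuous_intros cont_theta_gen[OF assms]) (simp add: norm_power_int)

lemma cnj_t2: "cnj (t2 v T n) = t2 (- cnj v) (- cnj T) n"
  unfolding t2_def by (simp add: exp_cnj algebra_simps)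

lemma cnj_theta2: "cnj (theta2 v T) = theta2 (- cnj v) (- cnj T)"
  unfolding theta2_t2 infsum_cnj[symmetric] cnj_t2 ..

lemma cnj_theta1: "cnj (theta1 v T) = - theta1 (- cnj v) (- cnj T)"
proof -
  have "cnj ((-1) powi n * t2 v T n) = (-1) powi n * t2 (- cnj v) (- cnj T) n" for n
    by (simp add: cnj_t2 power_int_minus_left)
  then show ?thesis unfolding theta1_t2 complex_cnj_mult infsum_cnj[symmetric] by simp
qed

lemma t2_reflect: "t2 v T (1 - n) = t2 (- v) T n"
proof -
  have "(of_int (1 - n) - 1/2 :: complex)^2 = (of_int n - 1/2)^2" by (simp add: power2_eq_square algebra_simps)
  moreover have "(2 * of_int (1 - n) - 1) * pi * \<i> * v = (2 * of_int n - 1) * pi * \<i> * (- v)" by (simp add: algebra_simps)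
  ultimately show ?thesis unfolding t2_def by simp
qed

lemma bij_refl: "bij_betw (\<lambda>n::int. 1 - n) UNIV UNIV"
  by (rule bij_betwI[where g = "\<lambda>n. 1 - n"]) auto

lemma theta2_even: "theta2 (- v) T = theta2 v T"
proof -
  have "theta2 v T = infsum (\<lambda>n. t2 v T (1 - n)) UNIV"
    unfolding theta2_t2 by (rule infsum_reindex_bij_betw[OF bij_refl, symmetric])
  then show ?thesis unfolding theta2_t2 t2_reflect by simp
qed

lemma theta1_odd: "theta1 (- v) T = - theta1 v T"
proof -
  have "infsum (\<lambda>n. (-1) powi n * t2 v T n) UNIV = infsum (\<lambda>n. (-1) powi (1 - n) * t2 v T (1 - n)) UNIV"
    by (rule infsum_reindex_bij_betw[OF bij_refl, symmetric])
  also have "\<dots> = infsum (\<lambda>n. - ((-1) powi n * t2 (- v) T n)) UNIV"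
    unfolding t2_reflect by (intro infsum_cong) (simp add: power_int_minus_left)
  also have "\<dots> = - infsum (\<lambda>n. (-1) powi n * t2 (- v) T n) UNIV"
    by (rule infsum_uminus)
  finally show ?thesis unfolding theta1_t2 by simp
qed

lemma integral_split_sum:
  fixes f :: "real \<Rightarrow> complex"
  assumes a: "a > 0" and N: "N > 0" and c: "continuous_on {0..a} f"
  shows "integral {0..a} f = (\<Sum>j=1..N. integral {a*(real j - 1)/N .. a*real j/N} f)"
proof -
  have "n \<le> N \<Longrightarrow> integral {0..a*real n/N} f = (\<Sum>j=1..n. integral {a*(real j - 1)/N .. a*real j/N} f)" for n
  proof (induction n)
    case 0 then show ?case by simp
  next
    case (Suc n)
    have le: "a*real n/N \<le> a*real (Suc n)/N" using a N by (simp add: divide_right_mono)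
    have le2: "a*real (Suc n)/N \<le> a"
    proof -
      have "a*real (Suc n) \<le> a * real N" using a Suc.prems by (intro mult_left_mono) auto
      then show ?thesis using N by (simp add: field_simps)
    qed
    have int: "f integrable_on {0..a*real (Suc n)/N}"
      by (rule integrable_continuous_real, rule continuous_on_subset[OF c]) (use le2 in auto)
    have "integral {0..a*real (Suc n)/N} f = integral {0..a*real n/N} f + integral {a*real n/N..a*real (Suc n)/N} f"
      by (rule Henstock_Kurzweil_Integration.integral_combine[symmetric, OF _ le int]) (use a N in simp)
    also have "\<dots> = (\<Sum>j=1..Suc n. integral {a*(real j - 1)/N .. a*real j/N} f)"
      using Suc by simp
    finally show ?case .
  qed
  from this[of N] show ?thesis using N by simp
qed

lemma riemann:
  fixes G :: "real \<times> real \<Rightarrow> complex" and k :: "nat \<Rightarrow> real" and s :: "nat \<Rightarrow> nat \<Rightarrow> real"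
  assumes a: "a > 0" and k0: "k1 \<le> k0" "k0 \<le> k2"
    and cont: "continuous_on ({k1..k2} \<times> {0..a}) G"
    and klim: "k \<longlonglongrightarrow> k0" and kin: "\<And>N. N \<ge> 2 \<Longrightarrow> k N \<in> {k1..k2}"
    and sin: "\<And>N j. 1 \<le> j \<Longrightarrow> j \<le> N \<Longrightarrow> a*(real j - 1)/N \<le> s N j \<and> s N j \<le> a*real j/N"
  shows "(\<lambda>N. complex_of_real (a / real N) * (\<Sum>j=1..N. G (k N, s N j))) \<longlonglongrightarrow> integral {0..a} (\<lambda>x. G (k0, x))"
proof (rule LIMSEQ_I)
  fix e :: real assume e: "e > 0"
  define CC where "CC = {k1..k2} \<times> {0..a}"
  have "uniformly_continuous_on CC G" unfolding CC_def
    by (rule compact_uniformly_continuous[OF cont]) (intro compact_Times compact_Icc)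
  then obtain d where d: "d > 0" and dd: "\<And>p q. p \<in> CC \<Longrightarrow> q \<in> CC \<Longrightarrow> dist p q < d \<Longrightarrow> dist (G p) (G q) < e / (2*a)"
    unfolding uniformly_continuous_on_def using e a by (metis divide_pos_pos mult_pos_pos zero_less_numeral)
  obtain N1 where N1: "\<And>N. N \<ge> N1 \<Longrightarrow> dist (k N) k0 < d/2"
    using klim d unfolding lim_sequentially by (metis half_gt_zero)
  obtain N2 :: nat where N2: "real N2 > 2 * a / d" using reals_Archimedean2 by blast
  show "\<exists>no. \<forall>N\<ge>no. norm (complex_of_real (a / real N) * (\<Sum>j=1..N. G (k N, s N j)) - integral {0..a} (\<lambda>x. G (k0, x))) < e"
  proof (intro exI allI impI)
    fix N assume NN: "N \<ge> max (max N1 N2) 2"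
    then have Npos: "N > 0" "N \<ge> 2" by auto
    have aN: "a / N < d/2"
    proof -
      have "2 * a / d < N" using N2 NN by linarith
      then show ?thesis using d a Npos by (simp add: field_simps)
    qed
    have kN: "k N \<in> {k1..k2}" "dist (k N) k0 < d/2" using kin N1 NN by auto
    have c0: "continuous_on {0..a} (\<lambda>x. G (k0, x))"
      by (rule continuous_on_compose2[OF cont]) (use k0 in \<open>auto intro!: continuous_intros\<close>)
    have split: "integral {0..a} (\<lambda>x. G (k0, x)) = (\<Sum>j=1..N. integral {a*(real j - 1)/N .. a*real j/N} (\<lambda>x. G (k0, x)))"
      by (rule integral_split_sum[OF a Npos(1) c0])
    have piece: "norm (complex_of_real (a / real N) * G (k N, s N j) - integral {a*(real j - 1)/N .. a*real j/N} (\<lambda>x. G (k0, x))) \<le> e/(2*a) * (a/N)"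
      if j: "1 \<le> j" "j \<le> N" for j
    proof -
      define l u where "l = a*(real j - 1)/N" and "u = a*real j/N"
      have lu: "l \<le> u" "0 \<le> l" "u \<le> a" "u - l = a/N" using a Npos j unfolding l_def u_def
        by (auto simp: field_simps divide_right_mono)
      have sj: "l \<le> s N j" "s N j \<le> u" using sin[OF j] unfolding l_def u_def by auto
      have ci: "continuous_on {l..u} (\<lambda>x. G (k0, x))" by (rule continuous_on_subset[OF c0]) (use lu in auto)
      have hi: "((\<lambda>x. G (k N, s N j) - G (k0, x)) has_integral
           (measure lborel {l..u} *\<^sub>R G (k N, s N j) - integral {l..u} (\<lambda>x. G (k0, x)))) {l..u}"
        by (intro has_integral_diff has_integral_const_real integrable_integral integrable_continuous_real ci)
      have bd: "norm (measure lborel {l..u} *\<^sub>R G (k N, s N j) - integral {l..u} (\<lambda>x. G (k0, x))) \<le> e/(2*a) * measure lborel {l..u}"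
      proof (rule has_integral_bound_real[OF _ _ hi])
        show "0 \<le> e / (2 * a)" using e a by simp
        fix x assume x: "x \<in> {l..u} - {}"
        have p1: "(k N, s N j) \<in> CC" "(k0, x) \<in> CC" using kN k0 lu sj x unfolding CC_def by auto
        have "dist (k N, s N j) (k0, x) \<le> \<bar>dist (k N) k0\<bar> + \<bar>dist (s N j) x\<bar>"
          unfolding dist_Pair_Pair by (rule sqrt_sum_squares_le_sum_abs)
        also have "\<dots> < d/2 + d/2"
        proof -
          have "\<bar>s N j - x\<bar> \<le> a / real N" using x sj lu(4) by auto
          then show ?thesis unfolding dist_real_def abs_abs using kN(2) aN unfolding dist_real_def by linarith
        qed
        finally have "dist (G (k N, s N j)) (G (k0, x)) < e / (2*a)" using dd[OF p1] by simp
        then show "norm (G (k N, s N j) - G (k0, x)) \<le> e / (2 * a)" by (simp add: dist_norm)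
      qed simp
      have m: "measure lborel {l..u} = a/N" using lu by simp
      have "norm (complex_of_real (a / real N) * G (k N, s N j) - integral {l..u} (\<lambda>x. G (k0, x))) \<le> e/(2*a) * (a/N)"
        using bd unfolding m scaleR_conv_of_real .
      then show ?thesis unfolding l_def u_def .
    qed
    have "norm (complex_of_real (a / real N) * (\<Sum>j=1..N. G (k N, s N j)) - integral {0..a} (\<lambda>x. G (k0, x)))
        = norm (\<Sum>j=1..N. (complex_of_real (a / real N) * G (k N, s N j) - integral {a*(real j - 1)/N .. a*real j/N} (\<lambda>x. G (k0, x))))"
      unfolding split by (simp add: sum_subtractf sum_distrib_left)
    also have "\<dots> \<le> (\<Sum>j=1..N. e/(2*a) * (a/N))"
      by (rule order_trans[OF norm_sum sum_mono]) (use piece in auto)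
    also have "\<dots> = e/2" using a Npos by simp
    also have "\<dots> < e" using e by simp
    finally show "norm (complex_of_real (a / real N) * (\<Sum>j=1..N. G (k N, s N j)) - integral {0..a} (\<lambda>x. G (k0, x))) < e" .
  qed
qed

lemma corr_zero:
  fixes G :: "real \<times> real \<Rightarrow> complex" and p :: "nat \<Rightarrow> real \<times> real" and a :: real
  assumes "compact CC" "continuous_on CC G" "\<And>N. N \<ge> 2 \<Longrightarrow> p N \<in> CC"
  shows "(\<lambda>N. complex_of_real (a / real N) * G (p N)) \<longlonglongrightarrow> 0"
proof -
  have "compact (G ` CC)" by (rule compact_continuous_image[OF assms(2,1)])
  then obtain Bn where Bn: "\<forall>y\<in>G ` CC. norm y \<le> Bn" using compact_imp_bounded bounded_iff by blast
  show ?thesis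
  proof (rule Lim_null_comparison)
    show "\<forall>\<^sub>F N in sequentially. norm (complex_of_real (a / real N) * G (p N)) \<le> \<bar>a\<bar> * Bn * inverse (real N)"
      using eventually_ge_at_top[of 2]
    proof eventually_elim
      case (elim N)
      then have "norm (G (p N)) \<le> Bn" using Bn assms(3) by auto
      then have "norm (G (p N)) * (\<bar>a\<bar> * inverse (real N)) \<le> Bn * (\<bar>a\<bar> * inverse (real N))"
        by (intro mult_right_mono) auto
      moreover have "norm (complex_of_real (a / real N) * G (p N)) = norm (G (p N)) * (\<bar>a\<bar> * inverse (real N))"
        unfolding norm_mult norm_of_real by (simp add: divide_inverse abs_mult)
      ultimately show ?case by (simp add: mult_ac)
    qed
    show "(\<lambda>N. \<bar>a\<bar> * Bn * inverse (real N)) \<longlonglongrightarrow> 0"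
      by (rule tendsto_mult_right_zero[OF lim_inverse_n])
  qed
qed

definition thT :: "rtype \<Rightarrow> complex \<Rightarrow> complex \<Rightarrow> complex" where
  "thT t = (if t = B \<or> t = Bv then theta1 else theta2)"

definition sgT :: "rtype \<Rightarrow> complex" where
  "sgT t = (if t = A then 0 else if t = D then 1 else -1)"

definition Mg :: "(complex \<Rightarrow> complex \<Rightarrow> complex) \<Rightarrow> complex \<Rightarrow> real \<Rightarrow> real \<Rightarrow> real \<Rightarrow> real \<Rightarrow> complex \<Rightarrow> complex" where
  "Mg th sg \<rho> W k l z =
     exp (2 * pi * \<i> * complex_of_real (sqrt \<rho> * l) * z)
       * th (\<i> * complex_of_real (sqrt \<rho> * W * l) + complex_of_real (k * \<rho> * W) * z) (\<i> * complex_of_real (k * \<rho> * W^2))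
     + sg * exp (- (2 * pi * \<i> * complex_of_real (sqrt \<rho> * l) * z))
       * th (\<i> * complex_of_real (sqrt \<rho> * W * l) - complex_of_real (k * \<rho> * W) * z) (\<i> * complex_of_real (k * \<rho> * W^2))"

lemma sg_helpers: "x + 0 * e * t = x" "x + (-1) * e * t = x - e * t" "x + 1 * e * t = x + e * (t::complex)"
  by simp_all

lemma Mfun_Mg:
  assumes r: "\<rho> > 0" and w: "W > 0" and N: "N > 0" and L: "L = real N / (\<rho> * W)"
  shows "Mfun t N L (\<i> * complex_of_real (W / L)) j z
     = Mg (thT t) (sgT t) \<rho> W (calN t N / N) (sqrt \<rho> * W * Jidx t j / N) z"
proof -
  have sq: "sqrt \<rho> * sqrt \<rho> = \<rho>" using r by simp
  have WL: "W / L = \<rho> * W^2 / N" unfolding L using r w N by (simp add: field_simps power2_eq_square)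
  have e1: "\<And>J. complex_of_real J * (\<i> * complex_of_real (W / L))
      = \<i> * complex_of_real (sqrt \<rho> * W * (sqrt \<rho> * W * J / N))"
  proof -
    fix J
    have "sqrt \<rho> * W * (sqrt \<rho> * W * J / N) = J * (W / L)" unfolding WL
      using sq by (simp add: field_simps power2_eq_square)
    then show "complex_of_real J * (\<i> * complex_of_real (W / L))
      = \<i> * complex_of_real (sqrt \<rho> * W * (sqrt \<rho> * W * J / N))" by (simp add: mult_ac)
  qed
  have e2: "\<And>NN. complex_of_real NN * z / complex_of_real L = complex_of_real (NN / N * \<rho> * W) * z"
  proof -
    fix NN
    have "NN / L = NN / N * \<rho> * W" using L by simp
    then have "complex_of_real NN / complex_of_real L = complex_of_real (NN / N * \<rho> * W)"
      by (metis of_real_divide)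
    moreover have "complex_of_real NN * z / complex_of_real L = (complex_of_real NN / complex_of_real L) * z" by simp
    ultimately show "complex_of_real NN * z / complex_of_real L = complex_of_real (NN / N * \<rho> * W) * z"
      by simp
  qed
  have e3: "\<And>NN. complex_of_real NN * (\<i> * complex_of_real (W / L)) = \<i> * complex_of_real (NN / N * \<rho> * W^2)"
  proof -
    fix NN
    have "NN * (W / L) = NN / N * \<rho> * W^2" unfolding WL by simp
    then show "complex_of_real NN * (\<i> * complex_of_real (W / L)) = \<i> * complex_of_real (NN / N * \<rho> * W^2)"
      unfolding \<open>NN * (W / L) = NN / N * \<rho> * W^2\<close>[symmetric] by (simp add: mult_ac)
  qed
  have e4: "\<And>J. 2 * pi * \<i> * complex_of_real J * z / complex_of_real L
      = 2 * pi * \<i> * complex_of_real (sqrt \<rho> * (sqrt \<rho> * W * J / N)) * z"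
  proof -
    fix J
    have "J / L = sqrt \<rho> * (sqrt \<rho> * W * J / N)" using L sq by (simp add: field_simps)
    then have "complex_of_real J / complex_of_real L = complex_of_real (sqrt \<rho> * (sqrt \<rho> * W * J / N))"
      by (metis of_real_divide)
    then show "2 * pi * \<i> * complex_of_real J * z / complex_of_real L
      = 2 * pi * \<i> * complex_of_real (sqrt \<rho> * (sqrt \<rho> * W * J / N)) * z"
    proof -
      have "2 * pi * \<i> * complex_of_real J * z / complex_of_real L = 2 * pi * \<i> * (complex_of_real J / complex_of_real L) * z"
        by simp
      then show ?thesis unfolding \<open>complex_of_real J / complex_of_real L = complex_of_real (sqrt \<rho> * (sqrt \<rho> * W * J / N))\<close> .
    qed
  qed
  have e5: "\<And>J. - 2 * pi * \<i> * complex_of_real J * z / complex_of_real L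
      = - (2 * pi * \<i> * complex_of_real (sqrt \<rho> * (sqrt \<rho> * W * J / N)) * z)"
  proof -
    fix J
    have "- 2 * pi * \<i> * complex_of_real J * z / complex_of_real L = - (2 * pi * \<i> * complex_of_real J * z / complex_of_real L)"
      by simp
    then show "- 2 * pi * \<i> * complex_of_real J * z / complex_of_real L
      = - (2 * pi * \<i> * complex_of_real (sqrt \<rho> * (sqrt \<rho> * W * J / N)) * z)" unfolding e4 .
  qed
  have e7: "\<And>x. sqrt \<rho> * W * (sqrt \<rho> * W * x / N) = x / N * \<rho> * W^2"
    using sq by (simp add: field_simps power2_eq_square)
  show ?thesis
    unfolding Mfun_def Let_def
    by (cases t) (simp_all only: e3 rtype.case, simp_all only: e2 e4 e5, simp_all only: Mg_def thT_def sgT_def e7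
          rtype.distinct if_True if_False simp_thms sg_helpers)
qed

definition wT :: "rtype \<Rightarrow> nat \<Rightarrow> nat \<Rightarrow> real" where
  "wT t N j = (if t = A then 1 else if (t = B \<or> t = Bv) \<and> j = 1 then 4
     else if t = D \<and> (j = 1 \<or> j = N) then 4 else 2)"

lemma imag_sq: "- 2 * (\<i> * a) * b * \<i> * c / d = 2 * a * b * c / (d::complex)"
  by (simp add: mult_ac)

lemma hfun_eq:
  assumes r: "\<rho> > 0" and w: "W > 0" and N: "N > 0" and L: "L = real N / (\<rho> * W)" and pos: "calN t N > 0"
  shows "hfun t N L W (\<i> * complex_of_real (W / L)) j
     = complex_of_real (wT t N j * (real N / (\<rho> * sqrt (2 * (calN t N / N)) * (sqrt \<rho> * W)))
         * exp (2 * pi * (sqrt \<rho> * W * Jidx t j / N)^2 / (calN t N / N)))"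
proof -
  have sq: "sqrt \<rho> * sqrt \<rho> = \<rho>" using r by simp
  have WL: "W / L = \<rho> * W^2 / N" unfolding L using r w N by (simp add: field_simps power2_eq_square)
  have LW: "L * W = N / \<rho>" unfolding L using w by simp
  have c1: "L * W / sqrt (2 * calN t N * Im (\<i> * complex_of_real (W / L)))
      = real N / (\<rho> * sqrt (2 * (calN t N / N)) * (sqrt \<rho> * W))"
  proof -
    have "2 * calN t N * Im (\<i> * complex_of_real (W / L)) = (2 * (calN t N / N)) * \<rho> * W^2"
      unfolding WL using N by simp
    then have "sqrt (2 * calN t N * Im (\<i> * complex_of_real (W / L))) = sqrt (2 * (calN t N / N)) * sqrt \<rho> * W"
    proof -
      have "sqrt ((2 * (calN t N / N)) * \<rho> * W^2) = sqrt (2 * (calN t N / N)) * sqrt \<rho> * W"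
        unfolding real_sqrt_mult real_sqrt_abs using w by simp
      then show ?thesis using \<open>2 * calN t N * Im (\<i> * complex_of_real (W / L)) = (2 * (calN t N / N)) * \<rho> * W^2\<close> by simp
    qed
    then show ?thesis unfolding LW by (simp add: field_simps)
  qed
  have c2: "\<And>J. exp (- 2 * (\<i> * complex_of_real (W / L)) * pi * \<i> * complex_of_real J ^ 2 / complex_of_real (calN t N))
      = complex_of_real (exp (2 * pi * (sqrt \<rho> * W * J / N)^2 / (calN t N / N)))"
  proof -
    fix J
    have "2 * pi * (sqrt \<rho> * W * J / N)^2 / (calN t N / N) = 2 * (W / L) * pi * J^2 / calN t N"
      unfolding WL using N pos r by (simp add: field_simps power2_eq_square)
    then have "- 2 * (\<i> * complex_of_real (W / L)) * pi * \<i> * complex_of_real J ^ 2 / complex_of_real (calN t N)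
      = complex_of_real (2 * pi * (sqrt \<rho> * W * J / N)^2 / (calN t N / N))"
      unfolding imag_sq by simp
    then show "exp (- 2 * (\<i> * complex_of_real (W / L)) * pi * \<i> * complex_of_real J ^ 2 / complex_of_real (calN t N))
      = complex_of_real (exp (2 * pi * (sqrt \<rho> * W * J / N)^2 / (calN t N / N)))"
      by (simp only: exp_of_real)
  qed
  show ?thesis
    unfolding hfun_def Let_def c1 c2
    by (cases t) (simp_all add: wT_def)
qed

definition Gg :: "(complex \<Rightarrow> complex \<Rightarrow> complex) \<Rightarrow> complex \<Rightarrow> real \<Rightarrow> real \<Rightarrow> real \<Rightarrow> complex \<Rightarrow> complex \<Rightarrow> real \<times> real \<Rightarrow> complex" where
  "Gg th sg w0 \<rho> W z z' p = (case p of (k, l) \<Rightarrow>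
     complex_of_real (\<rho> * sqrt (2 * k) / w0 * exp (- pi * k * \<rho> * ((Im z)^2 + (Im z')^2)) * exp (- 2 * pi * l^2 / k))
     * Mg th sg \<rho> W k l z * cnj (Mg th sg \<rho> W k l z'))"

definition w0T :: "rtype \<Rightarrow> real" where "w0T t = (if t = A then 1 else 2)"

lemma wT_pos: "wT t N j > 0" unfolding wT_def by auto

lemma KN_sum:
  assumes r: "\<rho> > 0" and w: "W > 0" and N: "N > 0" and pos: "calN t N > 0"
  shows "KN t W \<rho> N z z' = (\<Sum>j=1..N. complex_of_real (sqrt \<rho> * W / real N)
     * Gg (thT t) (sgT t) (w0T t) \<rho> W z z' (calN t N / N, sqrt \<rho> * W * Jidx t j / N)
     * complex_of_real (w0T t / wT t N j))"
proof -
  define L where "L = real N / (\<rho> * W)"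
  define k where "k = calN t N / N"
  define Y where "Y = (Im z)^2 + (Im z')^2"
  have kpos: "k > 0" unfolding k_def using pos N by simp
  have LW: "L * W = N / \<rho>" unfolding L_def using w by simp
  have P: "exp (- pi * calN t N * Y / (L * W)) = exp (- pi * k * \<rho> * Y)"
    unfolding LW k_def using N r by (simp add: field_simps)
  have tm: "complex_of_real (exp (- pi * calN t N * Y / (L * W))) *
      (Mfun t N L (\<i> * complex_of_real (W / L)) j z * cnj (Mfun t N L (\<i> * complex_of_real (W / L)) j z') /
       hfun t N L W (\<i> * complex_of_real (W / L)) j)
    = complex_of_real (sqrt \<rho> * W / real N)
     * Gg (thT t) (sgT t) (w0T t) \<rho> W z z' (calN t N / N, sqrt \<rho> * W * Jidx t j / N)
     * complex_of_real (w0T t / wT t N j)" for j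
  proof -
    define l where "l = sqrt \<rho> * W * Jidx t j / N"
    define X where "X = Mg (thT t) (sgT t) \<rho> W k l z * cnj (Mg (thT t) (sgT t) \<rho> W k l z')"
    define D where "D = wT t N j * (real N / (\<rho> * sqrt (2 * k) * (sqrt \<rho> * W))) * exp (2 * pi * l^2 / k)"
    have M: "Mfun t N L (\<i> * complex_of_real (W / L)) j z * cnj (Mfun t N L (\<i> * complex_of_real (W / L)) j z') = X"
      unfolding X_def k_def l_def using Mfun_Mg[OF r w N L_def] by simp
    have H: "hfun t N L W (\<i> * complex_of_real (W / L)) j = complex_of_real D"
      unfolding D_def k_def l_def by (rule hfun_eq[OF r w N L_def pos])
    have Gv: "Gg (thT t) (sgT t) (w0T t) \<rho> W z z' (k, l) =
       complex_of_real (\<rho> * sqrt (2 * k) / w0T t * exp (- pi * k * \<rho> * Y) * exp (- 2 * pi * l^2 / k)) * X"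
      unfolding Gg_def X_def Y_def by (simp add: mult.assoc)
    have real_eq: "exp (- pi * k * \<rho> * Y) / D
        = sqrt \<rho> * W / real N * (\<rho> * sqrt (2 * k) / w0T t * exp (- pi * k * \<rho> * Y) * exp (- 2 * pi * l^2 / k)) * (w0T t / wT t N j)"
    proof -
      have w0: "w0T t > 0" unfolding w0T_def by simp
      have "exp (- 2 * pi * l^2 / k) = inverse (exp (2 * pi * l^2 / k))" by (simp add: exp_minus[symmetric])
      then show ?thesis unfolding D_def using wT_pos[of t N j] w0 r w N kpos
        by (simp add: field_simps)
    qed
    have l1: "complex_of_real (exp (- pi * k * \<rho> * Y)) * (X / complex_of_real D) = complex_of_real (exp (- pi * k * \<rho> * Y) / D) * X"
      by (simp add: divide_inverse mult_ac)
    have l2: "complex_of_real (sqrt \<rho> * W / real N) * (complex_of_real (\<rho> * sqrt (2 * k) / w0T t * exp (- pi * k * \<rho> * Y) * exp (- 2 * pi * l^2 / k)) * X) * complex_of_real (w0T t / wT t N j)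
      = complex_of_real (sqrt \<rho> * W / real N * (\<rho> * sqrt (2 * k) / w0T t * exp (- pi * k * \<rho> * Y) * exp (- 2 * pi * l^2 / k)) * (w0T t / wT t N j)) * X"
      by (simp only: of_real_mult mult_ac)
    show ?thesis
      unfolding M H P k_def[symmetric] l_def[symmetric] Gv Y_def[symmetric] l1 l2 real_eq ..
  qed
  show ?thesis
    unfolding KN_def Let_def Kern_def L_def[symmetric] Y_def[symmetric] sum_distrib_left
    by (rule sum.cong[OF refl]) (rule tm)
qed

lemma cont_th:
  fixes S :: "'a::topological_space set"
  assumes "th = theta1 \<or> th = theta2" "compact S" "continuous_on S V" "continuous_on S T" "\<forall>x\<in>S. Im (T x) > 0"
  shows "continuous_on S (\<lambda>x. th (V x) (T x))"
  using assms(1) cont_theta1[OF assms(2-5)] cont_theta2[OF assms(2-5)] by auto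

lemma Gg_fs: "Gg th sg w0 \<rho> W z z' p =
     complex_of_real (\<rho> * sqrt (2 * fst p) / w0 * exp (- pi * fst p * \<rho> * ((Im z)^2 + (Im z')^2)) * exp (- 2 * pi * (snd p)^2 / fst p))
     * Mg th sg \<rho> W (fst p) (snd p) z * cnj (Mg th sg \<rho> W (fst p) (snd p) z')"
  by (cases p) (simp add: Gg_def)

lemma cont_Mg:
  assumes th: "th = theta1 \<or> th = theta2" and r: "\<rho> > 0" and w: "W > 0" and k1: "k1 > 0"
  shows "continuous_on ({k1..k2} \<times> {l1..l2}) (\<lambda>p. Mg th sg \<rho> W (fst p) (snd p) z)"
proof -
  define S where "S = {k1..k2} \<times> {l1..l2}"
  have S: "compact S" unfolding S_def by (intro compact_Times compact_Icc)
  have ImT: "\<forall>p\<in>S. Im (\<i> * complex_of_real (fst p * \<rho> * W^2)) > 0"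
    unfolding S_def using r w k1 by auto
  have c1: "continuous_on S (\<lambda>p. th (\<i> * complex_of_real (sqrt \<rho> * W * snd p) + complex_of_real (fst p * \<rho> * W) * z) (\<i> * complex_of_real (fst p * \<rho> * W^2)))"
    by (rule cont_th[OF th S _ _ ImT]) (intro continuous_intros)+
  have c2: "continuous_on S (\<lambda>p. th (\<i> * complex_of_real (sqrt \<rho> * W * snd p) - complex_of_real (fst p * \<rho> * W) * z) (\<i> * complex_of_real (fst p * \<rho> * W^2)))"
    by (rule cont_th[OF th S _ _ ImT]) (intro continuous_intros)+
  show ?thesis unfolding Mg_def S_def[symmetric]
    apply (rule continuous_on_add)
     apply (rule continuous_on_mult[OF _ c1], intro continuous_intros)
    apply (rule continuous_on_mult[OF _ c2], intro continuous_intros)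
    done
qed

lemma cont_Gg:
  assumes th: "th = theta1 \<or> th = theta2" and r: "\<rho> > 0" and w: "W > 0" and k1: "k1 > 0" and w0: "w0 \<noteq> 0"
  shows "continuous_on ({k1..k2} \<times> {l1..l2}) (Gg th sg w0 \<rho> W z z')"
proof -
  have m1: "continuous_on ({k1..k2} \<times> {l1..l2}) (\<lambda>p. Mg th sg \<rho> W (fst p) (snd p) z)" by (rule cont_Mg[OF th r w k1])
  have m2: "continuous_on ({k1..k2} \<times> {l1..l2}) (\<lambda>p. Mg th sg \<rho> W (fst p) (snd p) z')" by (rule cont_Mg[OF th r w k1])
  have nz: "\<forall>p\<in>{k1..k2} \<times> {l1..l2}. fst p \<noteq> 0" using k1 by auto
  show ?thesis unfolding Gg_fs[abs_def]
    apply (rule continuous_on_mult[OF continuous_on_mult[OF _ m1] continuous_on_cnj[OF m2]])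
    apply (rule continuous_on_of_real)
    apply (intro continuous_intros)
    using nz w0 apply auto
    done
qed

definition k0T :: "rtype \<Rightarrow> real" where "k0T t = (if t = A then 1 else 2)"
definition c1T :: "rtype \<Rightarrow> real" where "c1T t = (if t = B \<or> t = Bv \<or> t = D then 1/2 else 0)"
definition c2T :: "rtype \<Rightarrow> real" where "c2T t = (if t = D then 1/2 else 0)"

lemma wfac: "N \<ge> 2 \<Longrightarrow> w0T t / wT t N j = 1 - (if j = 1 then c1T t else 0) - (if j = N then c2T t else 0)"
  unfolding w0T_def wT_def c1T_def c2T_def by (cases t) auto

lemma calN_form: "\<exists>c. \<forall>N>0. calN t N / real N = k0T t + c * inverse (real N)"
proof (cases t)
  case A then show ?thesis by (intro exI[of _ 0]) (simp add: k0T_def)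
next
  case B then show ?thesis by (intro exI[of _ "-1"]) (simp add: k0T_def field_simps)
next
  case Bv then show ?thesis by (intro exI[of _ 0]) (simp add: k0T_def field_simps)
next
  case C then show ?thesis by (intro exI[of _ 2]) (simp add: k0T_def field_simps)
next
  case Cv then show ?thesis by (intro exI[of _ 0]) (simp add: k0T_def field_simps)
next
  case BC then show ?thesis by (intro exI[of _ 1]) (simp add: k0T_def field_simps)
next
  case D then show ?thesis by (intro exI[of _ "-2"]) (simp add: k0T_def field_simps)
qed

lemma calN_lim: "(\<lambda>N. calN t N / real N) \<longlonglongrightarrow> k0T t"
proof -
  obtain c where c: "\<And>N. N > 0 \<Longrightarrow> calN t N / real N = k0T t + c * inverse (real N)" using calN_form by blast
  have "(\<lambda>N. k0T t + c * inverse (real N)) \<longlonglongrightarrow> k0T t + c * 0"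
    by (intro tendsto_intros lim_inverse_n)
  then have L: "(\<lambda>N. k0T t + c * inverse (real N)) \<longlonglongrightarrow> k0T t" by simp
  have "\<forall>\<^sub>F N in sequentially. k0T t + c * inverse (real N) = calN t N / real N"
    using eventually_gt_at_top[of 0] by eventually_elim (simp add: c)
  then show ?thesis by (rule Lim_transform_eventually[OF L])
qed

lemma calN_range: "N \<ge> 2 \<Longrightarrow> calN t N / real N \<in> {1..4}"
  by (cases t) (auto simp: field_simps)

lemma calN_pos: "N \<ge> 2 \<Longrightarrow> calN t N > 0"
  by (cases t) auto

lemma Jidx_range: "1 \<le> j \<Longrightarrow> real j - 1 \<le> Jidx t j \<and> Jidx t j \<le> real j"
  by (cases t) auto

lemma thT_cases: "thT t = theta1 \<or> thT t = theta2" unfolding thT_def by auto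

lemma KN_lim:
  assumes r: "\<rho> > 0" and w: "W > 0"
  shows "(\<lambda>N. KN t W \<rho> N z z') \<longlonglongrightarrow> integral {0..sqrt \<rho> * W} (\<lambda>l. Gg (thT t) (sgT t) (w0T t) \<rho> W z z' (k0T t, l))"
proof -
  define a where "a = sqrt \<rho> * W"
  have a: "a > 0" unfolding a_def using r w by simp
  define G where "G = Gg (thT t) (sgT t) (w0T t) \<rho> W z z'"
  define k where "k N = calN t N / real N" for N
  define s where "s N j = a * Jidx t j / real N" for N j
  have cG: "continuous_on ({1..4} \<times> {0..a}) G" unfolding G_def
    by (rule cont_Gg[OF thT_cases r w]) (simp_all add: w0T_def)
  have k0: "1 \<le> k0T t" "k0T t \<le> 4" unfolding k0T_def by auto
  have R: "(\<lambda>N. complex_of_real (a / real N) * (\<Sum>j=1..N. G (k N, s N j))) \<longlonglongrightarrow> integral {0..a} (\<lambda>x. G (k0T t, x))"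
  proof (rule riemann[OF a k0 cG])
    show "k \<longlonglongrightarrow> k0T t" unfolding k_def by (rule calN_lim)
    show "\<And>N. 2 \<le> N \<Longrightarrow> k N \<in> {1..4}" unfolding k_def by (rule calN_range)
    fix N j :: nat assume j: "1 \<le> j" "j \<le> N"
    have "real j - 1 \<le> Jidx t j" "Jidx t j \<le> real j" using Jidx_range[OF j(1)] by auto
    then show "a * (real j - 1) / real N \<le> s N j \<and> s N j \<le> a * real j / real N"
      unfolding s_def using a by (auto intro!: divide_right_mono mult_left_mono)
  qed
  have cpt: "compact ({1..4::real} \<times> {0..a})" by (intro compact_Times compact_Icc)
  have pin: "(k N, s N j) \<in> {1..4} \<times> {0..a}" if "N \<ge> 2" "1 \<le> j" "j \<le> N" for N j
  proof -
    have "real j - 1 \<le> Jidx t j" "Jidx t j \<le> real j" using Jidx_range[OF that(2)] by auto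
    then have "0 \<le> Jidx t j" "Jidx t j \<le> N" using that by auto
    then have "0 \<le> s N j" "s N j \<le> a" unfolding s_def using a that by (auto simp: field_simps)
    then show ?thesis using calN_range[OF that(1)] unfolding k_def by auto
  qed
  have Z1: "(\<lambda>N. complex_of_real (a / real N) * G (k N, s N 1)) \<longlonglongrightarrow> 0"
    by (rule corr_zero[OF cpt cG], rule pin) auto
  have Z2: "(\<lambda>N. complex_of_real (a / real N) * G (k N, s N N)) \<longlonglongrightarrow> 0"
    by (rule corr_zero[OF cpt cG], rule pin) auto
  have T: "(\<lambda>N. complex_of_real (a / real N) * (\<Sum>j=1..N. G (k N, s N j))
      - complex_of_real (c1T t) * (complex_of_real (a / real N) * G (k N, s N 1))
      - complex_of_real (c2T t) * (complex_of_real (a / real N) * G (k N, s N N)))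
      \<longlonglongrightarrow> integral {0..a} (\<lambda>x. G (k0T t, x)) - complex_of_real (c1T t) * 0 - complex_of_real (c2T t) * 0"
    by (intro tendsto_intros R Z1 Z2)
  have ev: "KN t W \<rho> N z z' = complex_of_real (a / real N) * (\<Sum>j=1..N. G (k N, s N j))
      - complex_of_real (c1T t) * (complex_of_real (a / real N) * G (k N, s N 1))
      - complex_of_real (c2T t) * (complex_of_real (a / real N) * G (k N, s N N))" if N: "N \<ge> 2" for N
  proof -
    have "KN t W \<rho> N z z' = (\<Sum>j=1..N. complex_of_real (sqrt \<rho> * W / real N)
     * Gg (thT t) (sgT t) (w0T t) \<rho> W z z' (calN t N / N, sqrt \<rho> * W * Jidx t j / N)
     * complex_of_real (w0T t / wT t N j))"
      by (rule KN_sum[OF r w]) (use N calN_pos[OF N] in auto)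
    also have "\<dots> = (\<Sum>j=1..N. complex_of_real (a / real N) * G (k N, s N j)
        * complex_of_real (1 - (if j = 1 then c1T t else 0) - (if j = N then c2T t else 0)))"
      by (intro sum.cong refl) (simp only: wfac[OF N] a_def G_def k_def s_def)
    also have "\<dots> = (\<Sum>j=1..N. complex_of_real (a / real N) * G (k N, s N j))
        - (\<Sum>j=1..N. if j = 1 then complex_of_real (c1T t) * (complex_of_real (a / real N) * G (k N, s N j)) else 0)
        - (\<Sum>j=1..N. if j = N then complex_of_real (c2T t) * (complex_of_real (a / real N) * G (k N, s N j)) else 0)"
    proof -
      have pw: "complex_of_real (a / real N) * G (k N, s N j)
        * complex_of_real (1 - (if j = 1 then c1T t else 0) - (if j = N then c2T t else 0))
        = complex_of_real (a / real N) * G (k N, s N j)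
        - (if j = 1 then complex_of_real (c1T t) * (complex_of_real (a / real N) * G (k N, s N j)) else 0)
        - (if j = N then complex_of_real (c2T t) * (complex_of_real (a / real N) * G (k N, s N j)) else 0)" for j
        by (auto simp: algebra_simps)
      show ?thesis unfolding pw sum_subtractf ..
    qed
    also have "\<dots> = complex_of_real (a / real N) * (\<Sum>j=1..N. G (k N, s N j))
      - complex_of_real (c1T t) * (complex_of_real (a / real N) * G (k N, s N 1))
      - complex_of_real (c2T t) * (complex_of_real (a / real N) * G (k N, s N N))"
      using N by (simp add: sum.delta sum_distrib_left)
    finally show ?thesis .
  qed
  have T': "(\<lambda>N. complex_of_real (a / real N) * (\<Sum>j=1..N. G (k N, s N j))
      - complex_of_real (c1T t) * (complex_of_real (a / real N) * G (k N, s N 1))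
      - complex_of_real (c2T t) * (complex_of_real (a / real N) * G (k N, s N N)))
      \<longlonglongrightarrow> integral {0..a} (\<lambda>x. G (k0T t, x))" using T by simp
  have E: "\<forall>\<^sub>F N in sequentially. complex_of_real (a / real N) * (\<Sum>j=1..N. G (k N, s N j))
      - complex_of_real (c1T t) * (complex_of_real (a / real N) * G (k N, s N 1))
      - complex_of_real (c2T t) * (complex_of_real (a / real N) * G (k N, s N N)) = KN t W \<rho> N z z'"
    using eventually_ge_at_top[of 2] by eventually_elim (rule ev[symmetric])
  have "(\<lambda>N. KN t W \<rho> N z z') \<longlonglongrightarrow> integral {0..a} (\<lambda>x. G (k0T t, x))"
    by (rule Lim_transform_eventually[OF T' E])
  then show ?thesis unfolding G_def a_def .
qed

definition F1 :: "(complex \<Rightarrow> complex \<Rightarrow> complex) \<Rightarrow> real \<Rightarrow> real \<Rightarrow> complex \<Rightarrow> complex \<Rightarrow> real \<Rightarrow> complex" where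
  "F1 th \<rho> W z z' s = (let r = complex_of_real (sqrt \<rho>); w = complex_of_real W; p = complex_of_real \<rho> in
         exp (- pi * (complex_of_real s)^2 + 2 * pi * \<i> * r * (z - cnj z') * complex_of_real s)
         * th (r * w * (\<i> * complex_of_real s + 2 * r * z)) (2 * \<i> * p * w^2)
         * th (r * w * (\<i> * complex_of_real s - 2 * r * cnj z')) (2 * \<i> * p * w^2))"

definition F2 :: "(complex \<Rightarrow> complex \<Rightarrow> complex) \<Rightarrow> real \<Rightarrow> real \<Rightarrow> complex \<Rightarrow> complex \<Rightarrow> real \<Rightarrow> complex" where
  "F2 th \<rho> W z z' s = (let r = complex_of_real (sqrt \<rho>); w = complex_of_real W; p = complex_of_real \<rho> in
         exp (- pi * (complex_of_real s)^2 + 2 * pi * \<i> * r * (z + cnj z') * complex_of_real s)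
         * th (r * w * (\<i> * complex_of_real s + 2 * r * z)) (2 * \<i> * p * w^2)
         * th (r * w * (\<i> * complex_of_real s + 2 * r * cnj z')) (2 * \<i> * p * w^2))"

lemma I1_F1: "I1 \<mu> W \<rho> z z' = integral {- sqrt \<rho> * W .. sqrt \<rho> * W} (F1 (theta_mu \<mu>) \<rho> W z z')"
  unfolding I1_def F1_def Let_def ..

lemma I2_F2: "I2 \<mu> W \<rho> z z' = integral {- sqrt \<rho> * W .. sqrt \<rho> * W} (F2 (theta_mu \<mu>) \<rho> W z z')"
  unfolding I2_def F2_def Let_def ..

lemma exp_split:
  assumes "\<rho> \<ge> 0"
  shows "exp (- pi * (complex_of_real s)^2 + 2 * pi * \<i> * complex_of_real (sqrt \<rho>) * (x + y) * complex_of_real s)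
    = complex_of_real (exp (- pi * s^2)) * exp (2 * pi * \<i> * complex_of_real (sqrt \<rho> * s) * x)
      * exp (2 * pi * \<i> * complex_of_real (sqrt \<rho> * s) * y)"
proof -
  have "- pi * (complex_of_real s)^2 + 2 * pi * \<i> * complex_of_real (sqrt \<rho>) * (x + y) * complex_of_real s
     = complex_of_real (- pi * s^2) + 2 * pi * \<i> * complex_of_real (sqrt \<rho> * s) * x + 2 * pi * \<i> * complex_of_real (sqrt \<rho> * s) * y"
    by (simp add: algebra_simps)
  then show ?thesis by (simp only: exp_add exp_of_real)
qed

lemma pointwise_gen:
  fixes th :: "complex \<Rightarrow> complex \<Rightarrow> complex" and \<sigma> \<pi> sg :: complex
  assumes hpar: "\<And>v T. th (- v) T = \<pi> * th v T"
    and hcnj: "\<And>v T. cnj (th v T) = \<sigma> * th (- cnj v) (- cnj T)"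
    and hpi: "\<pi> = 1 \<or> \<pi> = -1" and hsg: "sg = 1 \<or> sg = -1" and r: "\<rho> > 0"
  shows "complex_of_real (exp (- pi * l^2)) * (Mg th sg \<rho> W 2 l z * cnj (Mg th sg \<rho> W 2 l z'))
     = \<sigma> * (F1 th \<rho> W z z' l + F1 th \<rho> W z z' (-l) + sg * (F2 th \<rho> W z z' l + F2 th \<rho> W z z' (-l)))"
proof -
  define r where "r = complex_of_real (sqrt \<rho>)"
  define w where "w = complex_of_real W"
  define p where "p = complex_of_real \<rho>"
  have rr: "r * r = p" unfolding r_def p_def using r by (simp flip: of_real_mult)
  define U where "U s x = r * w * (\<i> * complex_of_real s + 2 * r * x)" for s x
  define Tc where "Tc = 2 * \<i> * p * w^2"
  have TE: "\<i> * complex_of_real (2 * \<rho> * W^2) = Tc" unfolding Tc_def p_def w_def by simp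
  have TC: "- cnj Tc = Tc" unfolding Tc_def p_def w_def by simp
  have AE1: "\<i> * complex_of_real (sqrt \<rho> * W * l) + complex_of_real (2 * \<rho> * W) * x = U l x" for x
    unfolding U_def w_def r_def using rr[unfolded r_def p_def] by (simp add: algebra_simps)
  have AE2: "\<i> * complex_of_real (sqrt \<rho> * W * l) - complex_of_real (2 * \<rho> * W) * x = - U (-l) x" for x
    unfolding U_def w_def r_def using rr[unfolded r_def p_def] by (simp add: algebra_simps)
  have AE3: "r * w * (\<i> * complex_of_real s - 2 * r * y) = - U (-s) y" for s y
    unfolding U_def by (simp add: algebra_simps)
  have AE4: "- cnj (U s x) = - U (-s) (cnj x)" for s x
    unfolding U_def r_def w_def by simp
  define e where "e x = exp (2 * pi * \<i> * complex_of_real (sqrt \<rho> * l) * x)" for x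
  define f where "f x = exp (- (2 * pi * \<i> * complex_of_real (sqrt \<rho> * l) * x))" for x
  have Mz: "Mg th sg \<rho> W 2 l x = e x * th (U l x) Tc + sg * f x * (\<pi> * th (U (-l) x) Tc)" for x
    unfolding Mg_def AE1 AE2 TE hpar e_def f_def ..
  have cMz: "cnj (Mg th sg \<rho> W 2 l z') = cnj (e z') * (\<sigma> * (\<pi> * th (U (-l) (cnj z')) Tc))
       + sg * cnj (f z') * (\<pi> * (\<sigma> * (\<pi> * th (U l (cnj z')) Tc)))"
  proof -
    have sgc: "cnj sg = sg" using hsg by auto
    have pic: "cnj \<pi> = \<pi>" using hpi by auto
    show ?thesis unfolding Mz complex_cnj_add complex_cnj_mult sgc pic hcnj AE4 TC hpar minus_minus by simp
  qed
  have ce: "cnj (e z') = exp (- (2 * pi * \<i> * complex_of_real (sqrt \<rho> * l) * cnj z'))" unfolding e_def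
    by (simp add: exp_cnj)
  have cf: "cnj (f z') = exp (2 * pi * \<i> * complex_of_real (sqrt \<rho> * l) * cnj z')" unfolding f_def
    by (simp add: exp_cnj)
  define g where "g = complex_of_real (exp (- pi * l^2))"
  have ge: "exp (- pi * (complex_of_real (-l))^2 + 2 * pi * \<i> * r * (x + y) * complex_of_real (-l))
      = g * exp (- (2 * pi * \<i> * complex_of_real (sqrt \<rho> * l) * x)) * exp (- (2 * pi * \<i> * complex_of_real (sqrt \<rho> * l) * y))" for x y
    unfolding r_def g_def exp_split[OF less_imp_le[OF r]] by (simp add: exp_minus)
  have ge2: "exp (- pi * (complex_of_real l)^2 + 2 * pi * \<i> * r * (x + y) * complex_of_real l)
      = g * exp (2 * pi * \<i> * complex_of_real (sqrt \<rho> * l) * x) * exp (2 * pi * \<i> * complex_of_real (sqrt \<rho> * l) * y)" for x y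
    unfolding r_def g_def exp_split[OF less_imp_le[OF r]] ..
  define E1 where "E1 = exp (2 * pi * \<i> * complex_of_real (sqrt \<rho> * l) * z)"
  define E2 where "E2 = exp (- (2 * pi * \<i> * complex_of_real (sqrt \<rho> * l) * z))"
  define E3 where "E3 = exp (- (2 * pi * \<i> * complex_of_real (sqrt \<rho> * l) * cnj z'))"
  define E4 where "E4 = exp (2 * pi * \<i> * complex_of_real (sqrt \<rho> * l) * cnj z')"
  have ge3: "exp (- pi * (complex_of_real l)^2 + 2 * pi * \<i> * r * (x - y) * complex_of_real l)
      = g * exp (2 * pi * \<i> * complex_of_real (sqrt \<rho> * l) * x) * exp (- (2 * pi * \<i> * complex_of_real (sqrt \<rho> * l) * y))" for x y
    using ge2[of x "-y"] by simp
  have ge4: "exp (- pi * (complex_of_real (-l))^2 + 2 * pi * \<i> * r * (x - y) * complex_of_real (-l))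
      = g * exp (- (2 * pi * \<i> * complex_of_real (sqrt \<rho> * l) * x)) * exp (2 * pi * \<i> * complex_of_real (sqrt \<rho> * l) * y)" for x y
    using ge[of x "-y"] by simp
  have F1l: "F1 th \<rho> W z z' l = g * E1 * E3 * (th (U l z) Tc * (\<pi> * th (U (-l) (cnj z')) Tc))"
    unfolding F1_def Let_def r_def[symmetric] w_def[symmetric] p_def[symmetric] Tc_def[symmetric] U_def[symmetric]
      AE3 hpar ge3 E1_def E3_def by (simp add: mult_ac)
  have F1m: "F1 th \<rho> W z z' (-l) = g * E2 * E4 * (th (U (-l) z) Tc * (\<pi> * th (U l (cnj z')) Tc))"
    unfolding F1_def Let_def r_def[symmetric] w_def[symmetric] p_def[symmetric] Tc_def[symmetric] U_def[symmetric]
      AE3 hpar ge4 E2_def E4_def minus_minus by (simp add: mult_ac)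
  have F2l: "F2 th \<rho> W z z' l = g * E1 * E4 * (th (U l z) Tc * th (U l (cnj z')) Tc)"
    unfolding F2_def Let_def r_def[symmetric] w_def[symmetric] p_def[symmetric] Tc_def[symmetric] U_def[symmetric]
      ge2 E1_def E4_def by (simp add: mult_ac)
  have F2m: "F2 th \<rho> W z z' (-l) = g * E2 * E3 * (th (U (-l) z) Tc * th (U (-l) (cnj z')) Tc)"
    unfolding F2_def Let_def r_def[symmetric] w_def[symmetric] p_def[symmetric] Tc_def[symmetric] U_def[symmetric]
      ge E2_def E3_def by (simp add: mult_ac)
  have LHS: "Mg th sg \<rho> W 2 l z * cnj (Mg th sg \<rho> W 2 l z') =
     (E1 * th (U l z) Tc + sg * E2 * (\<pi> * th (U (-l) z) Tc)) *
     (E3 * (\<sigma> * (\<pi> * th (U (-l) (cnj z')) Tc)) + sg * E4 * (\<pi> * (\<sigma> * (\<pi> * th (U l (cnj z')) Tc))))"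
  proof -
    have "e z = E1" "f z = E2" "cnj (e z') = E3" "cnj (f z') = E4"
      unfolding ce cf unfolding e_def f_def E1_def E2_def E3_def E4_def by simp_all
    then show ?thesis unfolding Mz[of z] cMz by simp
  qed
  show ?thesis
    unfolding g_def[symmetric] F1l F1m F2l F2m LHS
    using hpi hsg by (elim disjE) (simp_all add: algebra_simps)
qed

lemma pointwise_theta1:
  assumes "sg = 1 \<or> sg = -1" "\<rho> > 0"
  shows "complex_of_real (exp (- pi * l^2)) * (Mg theta1 sg \<rho> W 2 l z * cnj (Mg theta1 sg \<rho> W 2 l z'))
     = (-1) * (F1 theta1 \<rho> W z z' l + F1 theta1 \<rho> W z z' (-l) + sg * (F2 theta1 \<rho> W z z' l + F2 theta1 \<rho> W z z' (-l)))"
  using pointwise_gen[of theta1 "-1" "-1" sg \<rho> l W z z'] assms theta1_odd cnj_theta1 by simp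

lemma pointwise_theta2:
  assumes "sg = 1 \<or> sg = -1" "\<rho> > 0"
  shows "complex_of_real (exp (- pi * l^2)) * (Mg theta2 sg \<rho> W 2 l z * cnj (Mg theta2 sg \<rho> W 2 l z'))
     = 1 * (F1 theta2 \<rho> W z z' l + F1 theta2 \<rho> W z z' (-l) + sg * (F2 theta2 \<rho> W z z' l + F2 theta2 \<rho> W z z' (-l)))"
  using pointwise_gen[of theta2 1 1 sg \<rho> l W z z'] assms theta2_even cnj_theta2 by simp

lemma sym_int:
  fixes H :: "real \<Rightarrow> complex"
  assumes c: "continuous_on {-a..a} H" and a: "a \<ge> 0"
  shows "integral {0..a} (\<lambda>l. H l + H (-l)) = integral {-a..a} H"
proof -
  have c1: "continuous_on {0..a} H" by (rule continuous_on_subset[OF c]) auto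
  have c2: "continuous_on {0..a} (\<lambda>l. H (-l))"
    by (rule continuous_on_compose2[OF c]) (auto intro!: continuous_intros)
  have r: "integral {-a..0} H = integral {0..a} (\<lambda>l. H (-l))"
    using Henstock_Kurzweil_Integration.integral_reflect_real[of a 0 "\<lambda>l. H (-l)"] by simp
  have "integral {-a..a} H = integral {-a..0} H + integral {0..a} H"
    by (rule Henstock_Kurzweil_Integration.integral_combine[symmetric]) (use a integrable_continuous_real[OF c] in auto)
  also have "\<dots> = integral {0..a} (\<lambda>l. H l + H (-l))"
    unfolding r by (subst integral_add) (use integrable_continuous_real[OF c1] integrable_continuous_real[OF c2] in auto)
  finally show ?thesis ..
qed

lemma cont_F:
  assumes th: "th = theta1 \<or> th = theta2" and r: "\<rho> > 0" and w: "W > 0"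
  shows "continuous_on {-b..b} (F1 th \<rho> W z z')" "continuous_on {-b..b} (F2 th \<rho> W z z')"
proof -
  have S: "compact {-b..b::real}" by simp
  have ImT: "\<forall>x\<in>{-b..b}. Im (2 * \<i> * complex_of_real \<rho> * (complex_of_real W)^2) > 0" using r w by simp
  have ct: "continuous_on {-b..b} (\<lambda>s. th (complex_of_real (sqrt \<rho>) * complex_of_real W * (\<i> * complex_of_real s + 2 * complex_of_real (sqrt \<rho>) * x)) (2 * \<i> * complex_of_real \<rho> * (complex_of_real W)^2))" for x
    by (rule cont_th[OF th S _ _ ImT]) (intro continuous_intros)+
  have ct2: "continuous_on {-b..b} (\<lambda>s. th (complex_of_real (sqrt \<rho>) * complex_of_real W * (\<i> * complex_of_real s - 2 * complex_of_real (sqrt \<rho>) * x)) (2 * \<i> * complex_of_real \<rho> * (complex_of_real W)^2))" for x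
    by (rule cont_th[OF th S _ _ ImT]) (intro continuous_intros)+
  show "continuous_on {-b..b} (F1 th \<rho> W z z')"
    unfolding F1_def[abs_def] Let_def
    by (rule continuous_on_mult[OF continuous_on_mult[OF _ ct] ct2]) (intro continuous_intros)
  show "continuous_on {-b..b} (F2 th \<rho> W z z')"
    unfolding F2_def[abs_def] Let_def
    by (rule continuous_on_mult[OF continuous_on_mult[OF _ ct] ct]) (intro continuous_intros)
qed

lemma Gg_2: "Gg th sg 2 \<rho> W z z' (2, l) = complex_of_real (\<rho> * exp (- 2 * pi * \<rho> * ((Im z)^2 + (Im z')^2)))
   * (complex_of_real (exp (- pi * l^2)) * (Mg th sg \<rho> W 2 l z * cnj (Mg th sg \<rho> W 2 l z')))"
proof -
  have "sqrt (2 * 2) = (2::real)" by (simp add: real_sqrt_mult)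
  then have "\<rho> * sqrt (2 * 2) / 2 * exp (- pi * 2 * \<rho> * ((Im z)^2 + (Im z')^2)) * exp (- 2 * pi * l^2 / 2)
     = \<rho> * exp (- 2 * pi * \<rho> * ((Im z)^2 + (Im z')^2)) * exp (- pi * l^2)" by simp
  then show ?thesis unfolding Gg_def prod.case by (simp only: of_real_mult mult_ac)
qed

lemma int_gen:
  assumes pw: "\<And>l. complex_of_real (exp (- pi * l^2)) * (Mg th sg \<rho> W 2 l z * cnj (Mg th sg \<rho> W 2 l z'))
     = \<sigma> * (F1 th \<rho> W z z' l + F1 th \<rho> W z z' (-l) + sg * (F2 th \<rho> W z z' l + F2 th \<rho> W z z' (-l)))"
    and c1: "continuous_on {-a..a} (F1 th \<rho> W z z')" and c2: "continuous_on {-a..a} (F2 th \<rho> W z z')"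
    and a: "a \<ge> 0"
  shows "integral {0..a} (\<lambda>l. Gg th sg 2 \<rho> W z z' (2, l)) = complex_of_real (\<rho> * exp (- 2 * pi * \<rho> * ((Im z)^2 + (Im z')^2)))
     * \<sigma> * (integral {-a..a} (F1 th \<rho> W z z') + sg * integral {-a..a} (F2 th \<rho> W z z'))"
proof -
  define c where "c = complex_of_real (\<rho> * exp (- 2 * pi * \<rho> * ((Im z)^2 + (Im z')^2)))"
  define H where "H s = \<sigma> * (F1 th \<rho> W z z' s + sg * F2 th \<rho> W z z' s)" for s
  have cH: "continuous_on {-a..a} H" unfolding H_def by (intro continuous_intros c1 c2)
  have IH: "integral {-a..a} H = \<sigma> * (integral {-a..a} (F1 th \<rho> W z z') + sg * integral {-a..a} (F2 th \<rho> W z z'))"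
  proof -
    have "(\<lambda>s. sg * F2 th \<rho> W z z' s) integrable_on {-a..a}"
      by (rule integrable_continuous_real) (intro continuous_intros c2)
    then show ?thesis unfolding H_def integral_mult_right
      by (subst integral_add) (use integrable_continuous_real[OF c1] in auto)
  qed
  have "integral {0..a} (\<lambda>l. Gg th sg 2 \<rho> W z z' (2, l)) = integral {0..a} (\<lambda>l. c * (H l + H (-l)))"
    unfolding Gg_2 c_def[symmetric] pw H_def by (intro integral_cong) (simp add: algebra_simps)
  also have "\<dots> = c * integral {-a..a} H" by (simp add: sym_int[OF cH a])
  also have "\<dots> = c * (\<sigma> * (integral {-a..a} (F1 th \<rho> W z z') + sg * integral {-a..a} (F2 th \<rho> W z z')))"
    unfolding IH ..
  finally show ?thesis unfolding c_def by (simp add: mult_ac)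
qed

lemma theta_mu_simps: "theta_mu 1 = theta1" "theta_mu 2 = theta2" unfolding theta_mu_def by auto

lemma lim_B:
  assumes r: "\<rho> > 0" and w: "W > 0" and t: "t = B \<or> t = Bv"
  shows "(\<lambda>N. KN t W \<rho> N z z') \<longlonglongrightarrow> KB W \<rho> z z'"
proof -
  have T: "thT t = theta1" "sgT t = -1" "w0T t = 2" "k0T t = 2" using t by (auto simp: thT_def sgT_def w0T_def k0T_def)
  have a: "sqrt \<rho> * W \<ge> 0" using r w by simp
  have "integral {0..sqrt \<rho> * W} (\<lambda>l. Gg theta1 (-1) 2 \<rho> W z z' (2, l)) = KB W \<rho> z z'"
  proof -
    have pw: "\<And>l. complex_of_real (exp (- pi * l^2)) * (Mg theta1 (-1) \<rho> W 2 l z * cnj (Mg theta1 (-1) \<rho> W 2 l z'))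
     = (-1) * (F1 theta1 \<rho> W z z' l + F1 theta1 \<rho> W z z' (-l) + (-1) * (F2 theta1 \<rho> W z z' l + F2 theta1 \<rho> W z z' (-l)))"
      by (rule pointwise_theta1) (use r in auto)
    show ?thesis
      unfolding KB_def KC_def KD_def I1_F1 I2_F2 theta_mu_simps
      by (subst int_gen[OF pw cont_F(1)[OF _ r w] cont_F(2)[OF _ r w] a]) (auto simp: algebra_simps)
  qed
  then show ?thesis using KN_lim[OF r w, of t z z'] unfolding T by simp
qed

lemma lim_C:
  assumes r: "\<rho> > 0" and w: "W > 0" and t: "t = C \<or> t = Cv \<or> t = BC"
  shows "(\<lambda>N. KN t W \<rho> N z z') \<longlonglongrightarrow> KC W \<rho> z z'"
proof -
  have T: "thT t = theta2" "sgT t = -1" "w0T t = 2" "k0T t = 2" using t by (auto simp: thT_def sgT_def w0T_def k0T_def)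
  have a: "sqrt \<rho> * W \<ge> 0" using r w by simp
  have "integral {0..sqrt \<rho> * W} (\<lambda>l. Gg theta2 (-1) 2 \<rho> W z z' (2, l)) = KC W \<rho> z z'"
  proof -
    have pw: "\<And>l. complex_of_real (exp (- pi * l^2)) * (Mg theta2 (-1) \<rho> W 2 l z * cnj (Mg theta2 (-1) \<rho> W 2 l z'))
     = 1 * (F1 theta2 \<rho> W z z' l + F1 theta2 \<rho> W z z' (-l) + (-1) * (F2 theta2 \<rho> W z z' l + F2 theta2 \<rho> W z z' (-l)))"
      by (rule pointwise_theta2) (use r in auto)
    show ?thesis
      unfolding KB_def KC_def KD_def I1_F1 I2_F2 theta_mu_simps
      by (subst int_gen[OF pw cont_F(1)[OF _ r w] cont_F(2)[OF _ r w] a]) (auto simp: algebra_simps)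
  qed
  then show ?thesis using KN_lim[OF r w, of t z z'] unfolding T by simp
qed

lemma lim_D:
  assumes r: "\<rho> > 0" and w: "W > 0"
  shows "(\<lambda>N. KN D W \<rho> N z z') \<longlonglongrightarrow> KD W \<rho> z z'"
proof -
  have T: "thT D = theta2" "sgT D = 1" "w0T D = 2" "k0T D = 2" by (auto simp: thT_def sgT_def w0T_def k0T_def)
  have a: "sqrt \<rho> * W \<ge> 0" using r w by simp
  have "integral {0..sqrt \<rho> * W} (\<lambda>l. Gg theta2 1 2 \<rho> W z z' (2, l)) = KD W \<rho> z z'"
  proof -
    have pw: "\<And>l. complex_of_real (exp (- pi * l^2)) * (Mg theta2 1 \<rho> W 2 l z * cnj (Mg theta2 1 \<rho> W 2 l z'))
     = 1 * (F1 theta2 \<rho> W z z' l + F1 theta2 \<rho> W z z' (-l) + 1 * (F2 theta2 \<rho> W z z' l + F2 theta2 \<rho> W z z' (-l)))"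
      by (rule pointwise_theta2) (use r in auto)
    show ?thesis
      unfolding KB_def KC_def KD_def I1_F1 I2_F2 theta_mu_simps
      by (subst int_gen[OF pw cont_F(1)[OF _ r w] cont_F(2)[OF _ r w] a]) (auto simp: algebra_simps)
  qed
  then show ?thesis using KN_lim[OF r w, of D z z'] unfolding T by simp
qed

definition FA :: "real \<Rightarrow> real \<Rightarrow> complex \<Rightarrow> complex \<Rightarrow> real \<Rightarrow> complex" where
  "FA \<rho> W z z' s = (let r = complex_of_real (sqrt \<rho>); w = complex_of_real W; p = complex_of_real \<rho> in
         exp (- 2 * pi * (complex_of_real s)^2 + 2 * pi * \<i> * r * (z - cnj z') * complex_of_real s)
         * theta2 (r * w * (\<i> * complex_of_real s + r * z)) (\<i> * p * w^2)
         * theta2 (r * w * (\<i> * complex_of_real s - r * cnj z')) (\<i> * p * w^2))"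

lemma KA_FA: "KA W \<rho> z z' = complex_of_real (sqrt 2 * \<rho> * exp (- pi * \<rho> * ((Im z)^2 + (Im z')^2)))
   * integral {0 .. sqrt \<rho> * W} (FA \<rho> W z z')"
  unfolding KA_def FA_def Let_def ..

lemma pointwise_A:
  assumes r: "\<rho> > 0"
  shows "Gg theta2 0 1 \<rho> W z z' (1, l) = complex_of_real (sqrt 2 * \<rho> * exp (- pi * \<rho> * ((Im z)^2 + (Im z')^2))) * FA \<rho> W z z' l"
proof -
  define rr where "rr = complex_of_real (sqrt \<rho>)"
  define w where "w = complex_of_real W"
  define p where "p = complex_of_real \<rho>"
  have rrp: "rr * rr = p" unfolding rr_def p_def using r by (simp flip: of_real_mult)
  define U where "U x = rr * w * (\<i> * complex_of_real l + rr * x)" for x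
  define Tc where "Tc = \<i> * p * w^2"
  have TE: "\<i> * complex_of_real (1 * \<rho> * W^2) = Tc" unfolding Tc_def p_def w_def by simp
  have TC: "- cnj Tc = Tc" unfolding Tc_def p_def w_def by simp
  have AE1: "\<i> * complex_of_real (sqrt \<rho> * W * l) + complex_of_real (1 * \<rho> * W) * x = U x" for x
    unfolding U_def w_def rr_def using rrp[unfolded rr_def p_def] by (simp add: algebra_simps)
  have AE4: "- cnj (U x) = rr * w * (\<i> * complex_of_real l - rr * cnj x)" for x
    unfolding U_def rr_def w_def by (simp add: algebra_simps)
  define E1 where "E1 = exp (2 * pi * \<i> * complex_of_real (sqrt \<rho> * l) * z)"
  define E3 where "E3 = exp (- (2 * pi * \<i> * complex_of_real (sqrt \<rho> * l) * cnj z'))"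
  have Mz: "Mg theta2 0 \<rho> W 1 l x = exp (2 * pi * \<i> * complex_of_real (sqrt \<rho> * l) * x) * theta2 (U x) Tc" for x
    unfolding Mg_def AE1 TE by simp
  have cM: "cnj (Mg theta2 0 \<rho> W 1 l z') = E3 * theta2 (rr * w * (\<i> * complex_of_real l - rr * cnj z')) Tc"
    unfolding Mz complex_cnj_mult cnj_theta2 AE4 TC E3_def by (simp add: exp_cnj)
  have ex: "exp (- 2 * pi * (complex_of_real l)^2 + 2 * pi * \<i> * rr * (z - cnj z') * complex_of_real l)
     = complex_of_real (exp (- 2 * pi * l^2)) * E1 * E3"
  proof -
    have "- 2 * pi * (complex_of_real l)^2 + 2 * pi * \<i> * rr * (z - cnj z') * complex_of_real l
      = complex_of_real (- 2 * pi * l^2) + 2 * pi * \<i> * complex_of_real (sqrt \<rho> * l) * z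
        + (- (2 * pi * \<i> * complex_of_real (sqrt \<rho> * l) * cnj z'))"
      unfolding rr_def by (simp add: algebra_simps)
    then show ?thesis unfolding E1_def E3_def by (simp only: exp_add exp_of_real)
  qed
  have FAe: "FA \<rho> W z z' l = complex_of_real (exp (- 2 * pi * l^2)) * E1 * E3 * theta2 (U z) Tc
      * theta2 (rr * w * (\<i> * complex_of_real l - rr * cnj z')) Tc"
    unfolding FA_def Let_def rr_def[symmetric] w_def[symmetric] p_def[symmetric] Tc_def[symmetric] U_def[symmetric] ex ..
  have re: "\<rho> * sqrt (2 * 1) / 1 * exp (- pi * 1 * \<rho> * ((Im z)^2 + (Im z')^2)) * exp (- 2 * pi * l^2 / 1)
     = sqrt 2 * \<rho> * exp (- pi * \<rho> * ((Im z)^2 + (Im z')^2)) * exp (- 2 * pi * l^2)" by simp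
  show ?thesis
    unfolding Gg_def prod.case cM Mz[of z] FAe re E1_def[symmetric] by (simp add: mult_ac)
qed

lemma cont_FA:
  assumes r: "\<rho> > 0" and w: "W > 0"
  shows "continuous_on {0..b} (FA \<rho> W z z')"
proof -
  have S: "compact {0..b::real}" by simp
  have ImT: "\<forall>x\<in>{0..b}. Im (\<i> * complex_of_real \<rho> * (complex_of_real W)^2) > 0" using r w by simp
  have ct: "continuous_on {0..b} (\<lambda>s. theta2 (complex_of_real (sqrt \<rho>) * complex_of_real W * (\<i> * complex_of_real s + complex_of_real (sqrt \<rho>) * x)) (\<i> * complex_of_real \<rho> * (complex_of_real W)^2))" for x
    by (rule cont_th[OF _ S _ _ ImT]) (simp, (intro continuous_intros)+)
  have ct2: "continuous_on {0..b} (\<lambda>s. theta2 (complex_of_real (sqrt \<rho>) * complex_of_real W * (\<i> * complex_of_real s - complex_of_real (sqrt \<rho>) * x)) (\<i> * complex_of_real \<rho> * (complex_of_real W)^2))" for x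
    by (rule cont_th[OF _ S _ _ ImT]) (simp, (intro continuous_intros)+)
  show ?thesis
    unfolding FA_def[abs_def] Let_def
    by (rule continuous_on_mult[OF continuous_on_mult[OF _ ct] ct2]) (intro continuous_intros)
qed

lemma lim_A:
  assumes r: "\<rho> > 0" and w: "W > 0"
  shows "(\<lambda>N. KN A W \<rho> N z z') \<longlonglongrightarrow> KA W \<rho> z z'"
proof -
  have T: "thT A = theta2" "sgT A = 0" "w0T A = 1" "k0T A = 1" by (auto simp: thT_def sgT_def w0T_def k0T_def)
  have "integral {0..sqrt \<rho> * W} (\<lambda>l. Gg theta2 0 1 \<rho> W z z' (1, l)) = KA W \<rho> z z'"
    unfolding KA_FA pointwise_A[OF r] integral_mult_right ..
  then show ?thesis using KN_lim[OF r w, of A z z'] unfolding T by simp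
qed

theorem proposition3p3:
  fixes \<rho> W :: real
  assumes "\<rho> > 0" and "W > 0"
  shows "(\<forall>z z'. (\<lambda>N. KN A W \<rho> N z z') \<longlonglongrightarrow> KA W \<rho> z z')
       \<and> (\<forall>t \<in> {B, Bv}. \<forall>z z'. (\<lambda>N. KN t W \<rho> N z z') \<longlonglongrightarrow> KB W \<rho> z z')
       \<and> (\<forall>t \<in> {C, Cv, BC}. \<forall>z z'. (\<lambda>N. KN t W \<rho> N z z') \<longlonglongrightarrow> KC W \<rho> z z')
       \<and> (\<forall>z z'. (\<lambda>N. KN D W \<rho> N z z') \<longlonglongrightarrow> KD W \<rho> z z')"
  using lim_A[OF assms] lim_B[OF assms] lim_C[OF assms] lim_D[OF assms] by blast

end
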